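(* Let $k$ be a field, $X$ a set, and $S\subseteq GDNP(X)$. Let $\varphi:GDNP(X)\to C(X)$ be the GDN-Poisson algebra homomorphism induced by $a\mapsto a$ ($a\in X$), where $C(X)$ is regarded as a GDN-Poisson algebra via $x\circ y=x\ast Dy$. Then the GDN-Poisson algebra $GDNP(X|S)=GDNP(X)/Id(S)$ embeds into $C(X|\varphi(S))$: the GDN-Poisson algebra homomorphism $GDNP(X|S)\to C(X|\varphi(S))$ induced by $a\mapsto a$ is injective.
   Context: A GDN-Poisson algebra is a vector space $\mathcal A$ with bilinear products $\cdot,\circ$ such that $(\mathcal A,\cdot)$ is commutative associative with unit $e$, $(\mathcal A,\circ)$ satisfies $x\circ(y\circ z)-(x\circ y)\circ z=y\circ(x\circ z)-(y\circ x)\circ z$ and $(x\circ y)\circ z=(x\circ z)\circ y$, and $(x\cdot y)\circ z=x\cdot(y\circ z)$, $(x\circ y)\cdot z-x\circ(y\cdot z)=(y\circ x)\cdot z-y\circ(x\cdot z)$. $GDNP(X)$ is the free GDN-Poisson algebra on $X$, and $Id(S)$ its ideal generated by $S$. A special GDN-Poisson admissible algebra $(\mathcal A,\cdot,\ast,D)$ is a vector space with bilinear products $\cdot,\ast$ and a linear map $D$ such that $(\mathcal A,\cdot)$ is commutative associative with unit $e$, $(\mathcal A,\ast)$ is commutative associative, and $(x\cdot y)\ast z=x\cdot(y\ast z)$, $D(x\ast y)=(Dx)\ast y+x\ast(Dy)$, $D(x\cdot y)=(Dx)\cdot y+x\cdot(Dy)-x\cdot y\cdot(De)$. $C(X)$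 denotes the free such algebra generated by $X$; for $R\subseteq C(X)$, $C(X|R)=C(X)/Id[R]$ where $Id[R]$ is the ideal of $C(X)$ (closed under $\cdot,\ast,D$) generated by $R$. With $x\circ y:=x\ast Dy$, any such algebra is a GDN-Poisson algebra. *)

theory Defs
  imports Main
begin

datatype ('k, 'x) gterm =
    GV 'x | G0 | GE | GAdd "('k,'x) gterm" "('k,'x) gterm" | GSm 'k "('k,'x) gterm"
  | GDot "('k,'x) gterm" "('k,'x) gterm" | GCirc "('k,'x) gterm" "('k,'x) gterm"

definition gsub :: "('k::field,'x) gterm \<Rightarrow> ('k,'x) gterm \<Rightarrow> ('k,'x) gterm" where
  "gsub t u = GAdd t (GSm (-1) u)"

text \<open>gcong S t u: t and u are equal in GDNP(X|S) = GDNP(X)/Id(S), i.e. the smallest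
  congruence containing all instances of the defining identities of GDN-Poisson algebras
  (vector space, bilinearity, the algebra identities) and identifying every s in S with 0.
  With S = {} this is equality in the free GDN-Poisson algebra GDNP(X).\<close>
inductive gcong :: "('k::field,'x) gterm set \<Rightarrow> ('k,'x) gterm \<Rightarrow> ('k,'x) gterm \<Rightarrow> bool"
  for S where
  g_refl: "gcong S t t"
| g_sym: "gcong S t u \<Longrightarrow> gcong S u t"
| g_trans: "gcong S t u \<Longrightarrow> gcong S u v \<Longrightarrow> gcong S t v"
| g_add: "gcong S t t' \<Longrightarrow> gcong S u u' \<Longrightarrow> gcong S (GAdd t u) (GAdd t' u')"
| g_sm: "gcong S t t' \<Longrightarrow> gcong S (GSm a t) (GSm a t')"
| g_dot: "gcong S t t' \<Longrightarrow> gcong S u u' \<Longrightarrow> gcong S (GDot t u) (GDot t' u')"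
| g_circ: "gcong S t t' \<Longrightarrow> gcong S u u' \<Longrightarrow> gcong S (GCirc t u) (GCirc t' u')"
| g_add_assoc: "gcong S (GAdd (GAdd t u) v) (GAdd t (GAdd u v))"
| g_add_comm: "gcong S (GAdd t u) (GAdd u t)"
| g_add_zero: "gcong S (GAdd t G0) t"
| g_add_inv: "gcong S (GAdd t (GSm (-1) t)) G0"
| g_sm_sm: "gcong S (GSm a (GSm b t)) (GSm (a * b) t)"
| g_sm_one: "gcong S (GSm 1 t) t"
| g_sm_add: "gcong S (GSm a (GAdd t u)) (GAdd (GSm a t) (GSm a u))"
| g_add_sm: "gcong S (GSm (a + b) t) (GAdd (GSm a t) (GSm b t))"
| g_dot_addl: "gcong S (GDot (GAdd t u) v) (GAdd (GDot t v) (GDot u v))"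
| g_dot_addr: "gcong S (GDot t (GAdd u v)) (GAdd (GDot t u) (GDot t v))"
| g_dot_sml: "gcong S (GDot (GSm a t) u) (GSm a (GDot t u))"
| g_dot_smr: "gcong S (GDot t (GSm a u)) (GSm a (GDot t u))"
| g_circ_addl: "gcong S (GCirc (GAdd t u) v) (GAdd (GCirc t v) (GCirc u v))"
| g_circ_addr: "gcong S (GCirc t (GAdd u v)) (GAdd (GCirc t u) (GCirc t v))"
| g_circ_sml: "gcong S (GCirc (GSm a t) u) (GSm a (GCirc t u))"
| g_circ_smr: "gcong S (GCirc t (GSm a u)) (GSm a (GCirc t u))"
| g_dot_comm: "gcong S (GDot x y) (GDot y x)"
| g_dot_assoc: "gcong S (GDot (GDot x y) z) (GDot x (GDot y z))"
| g_dot_unit: "gcong S (GDot GE x) x"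
| g_leftsym: "gcong S (gsub (GCirc x (GCirc y z)) (GCirc (GCirc x y) z))
                      (gsub (GCirc y (GCirc x z)) (GCirc (GCirc y x) z))"
| g_rightcomm: "gcong S (GCirc (GCirc x y) z) (GCirc (GCirc x z) y)"
| g_comp1: "gcong S (GCirc (GDot x y) z) (GDot x (GCirc y z))"
| g_comp2: "gcong S (gsub (GDot (GCirc x y) z) (GCirc x (GDot y z)))
                    (gsub (GDot (GCirc y x) z) (GCirc y (GDot x z)))"
| g_gen: "s \<in> S \<Longrightarrow> gcong S s G0"

datatype ('k, 'x) cterm =
    CV 'x | C0 | CE | CAdd "('k,'x) cterm" "('k,'x) cterm" | CSm 'k "('k,'x) cterm"
  | CDot "('k,'x) cterm" "('k,'x) cterm" | CStar "('k,'x) cterm" "('k,'x) cterm"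
  | CD "('k,'x) cterm"

definition csub :: "('k::field,'x) cterm \<Rightarrow> ('k,'x) cterm \<Rightarrow> ('k,'x) cterm" where
  "csub t u = CAdd t (CSm (-1) u)"

text \<open>ccong R t u: t and u are equal in C(X|R) = C(X)/Id[R], where Id[R] is the ideal
  closed under dot, star and D generated by R.  With R = {} this is equality in C(X).\<close>
inductive ccong :: "('k::field,'x) cterm set \<Rightarrow> ('k,'x) cterm \<Rightarrow> ('k,'x) cterm \<Rightarrow> bool"
  for R where
  c_refl: "ccong R t t"
| c_sym: "ccong R t u \<Longrightarrow> ccong R u t"
| c_trans: "ccong R t u \<Longrightarrow> ccong R u v \<Longrightarrow> ccong R t v"
| c_add: "ccong R t t' \<Longrightarrow> ccong R u u' \<Longrightarrow> ccong R (CAdd t u) (CAdd t' u')"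
| c_sm: "ccong R t t' \<Longrightarrow> ccong R (CSm a t) (CSm a t')"
| c_dot: "ccong R t t' \<Longrightarrow> ccong R u u' \<Longrightarrow> ccong R (CDot t u) (CDot t' u')"
| c_star: "ccong R t t' \<Longrightarrow> ccong R u u' \<Longrightarrow> ccong R (CStar t u) (CStar t' u')"
| c_D: "ccong R t t' \<Longrightarrow> ccong R (CD t) (CD t')"
| c_add_assoc: "ccong R (CAdd (CAdd t u) v) (CAdd t (CAdd u v))"
| c_add_comm: "ccong R (CAdd t u) (CAdd u t)"
| c_add_zero: "ccong R (CAdd t C0) t"
| c_add_inv: "ccong R (CAdd t (CSm (-1) t)) C0"
| c_sm_sm: "ccong R (CSm a (CSm b t)) (CSm (a * b) t)"
| c_sm_one: "ccong R (CSm 1 t) t"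
| c_sm_add: "ccong R (CSm a (CAdd t u)) (CAdd (CSm a t) (CSm a u))"
| c_add_sm: "ccong R (CSm (a + b) t) (CAdd (CSm a t) (CSm b t))"
| c_dot_addl: "ccong R (CDot (CAdd t u) v) (CAdd (CDot t v) (CDot u v))"
| c_dot_addr: "ccong R (CDot t (CAdd u v)) (CAdd (CDot t u) (CDot t v))"
| c_dot_sml: "ccong R (CDot (CSm a t) u) (CSm a (CDot t u))"
| c_dot_smr: "ccong R (CDot t (CSm a u)) (CSm a (CDot t u))"
| c_star_addl: "ccong R (CStar (CAdd t u) v) (CAdd (CStar t v) (CStar u v))"
| c_star_addr: "ccong R (CStar t (CAdd u v)) (CAdd (CStar t u) (CStar t v))"
| c_star_sml: "ccong R (CStar (CSm a t) u) (CSm a (CStar t u))"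
| c_star_smr: "ccong R (CStar t (CSm a u)) (CSm a (CStar t u))"
| c_D_add: "ccong R (CD (CAdd t u)) (CAdd (CD t) (CD u))"
| c_D_sm: "ccong R (CD (CSm a t)) (CSm a (CD t))"
| c_dot_comm: "ccong R (CDot x y) (CDot y x)"
| c_dot_assoc: "ccong R (CDot (CDot x y) z) (CDot x (CDot y z))"
| c_dot_unit: "ccong R (CDot CE x) x"
| c_star_comm: "ccong R (CStar x y) (CStar y x)"
| c_star_assoc: "ccong R (CStar (CStar x y) z) (CStar x (CStar y z))"
| c_comp: "ccong R (CStar (CDot x y) z) (CDot x (CStar y z))"
| c_D_star: "ccong R (CD (CStar x y)) (CAdd (CStar (CD x) y) (CStar x (CD y)))"
| c_D_dot: "ccong R (CD (CDot x y))
                    (csub (CAdd (CDot (CD x) y) (CDot x (CD y))) (CDot (CDot x y) (CD CE)))"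
| c_gen: "r \<in> R \<Longrightarrow> ccong R r C0"

primrec phi :: "('k,'x) gterm \<Rightarrow> ('k,'x) cterm" where
  "phi (GV a) = CV a"
| "phi G0 = C0"
| "phi GE = CE"
| "phi (GAdd t u) = CAdd (phi t) (phi u)"
| "phi (GSm a t) = CSm a (phi t)"
| "phi (GDot t u) = CDot (phi t) (phi u)"
| "phi (GCirc t u) = CStar (phi t) (CD (phi u))"

end

theory Submission
  imports Defs "HOL-Computational_Algebra.Formal_Laurent_Series"
begin

unbundle fps_syntax
notation fls_nth (infixl "$$" 75)

lemma fls_times_nth_bounds:
  fixes f g :: "'a::comm_ring_1 fls"
  assumes fa: "\<And>i. i < a \<Longrightarrow> f $$ i = 0" and gb: "\<And>j. j < b \<Longrightarrow> g $$ j = 0"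
  shows "(f * g) $$ n = (\<Sum>i=a..n-b. f $$ i * g $$ (n - i))"
proof (cases "f = 0 \<or> g = 0")
  case True
  then show ?thesis by auto
next
  case False
  then have "f $$ fls_subdegree f \<noteq> 0" "g $$ fls_subdegree g \<noteq> 0" by auto
  then have ad: "a \<le> fls_subdegree f" and bd: "b \<le> fls_subdegree g" using fa gb by force+
  have "(f * g) $$ n = (\<Sum>i=fls_subdegree f..n - fls_subdegree g. f $$ i * g $$ (n - i))"
    by (rule fls_times_nth(2))
  also have "\<dots> = (\<Sum>i=a..n-b. f $$ i * g $$ (n - i))"
  proof (rule sum.mono_neutral_left)
    show "\<forall>i\<in>{a..n - b} - {fls_subdegree f..n - fls_subdegree g}. f $$ i * g $$ (n - i) = 0"
    proof
      fix i assume "i \<in> {a..n - b} - {fls_subdegree f..n - fls_subdegree g}"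
      then have "i < fls_subdegree f \<or> n - i < fls_subdegree g" by auto
      then show "f $$ i * g $$ (n - i) = 0" by auto
    qed
  qed (use ad bd in auto)
  finally show ?thesis .
qed

locale tw =
  fixes d :: "'a::comm_ring_1 \<Rightarrow> 'a" and kap :: "'k::field \<Rightarrow> 'a"
  assumes d_add: "d (x+y) = d x + d y"
  and d_mult: "d (x*y) = d x * y + x * d y - x*y*d 1"
  and d_sm: "d (kap a * x) = kap a * d x"
  and k_add: "kap (a+b) = kap a + kap b" and k_mult: "kap (a*b) = kap a * kap b"
  and k_one: "kap 1 = 1"
begin

definition del :: "'a \<Rightarrow> 'a" where "del x = d x - x * d 1"

lemma del_add: "del (x+y) = del x + del y"
  by (simp add: del_def d_add algebra_simps)
lemma del_0[simp]: "del 0 = 0"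
  using del_add[of 0 0] by simp
lemma del_mult: "del (x*y) = del x * y + x * del y"
  by (simp add: del_def d_mult algebra_simps)
lemma del_1[simp]: "del 1 = 0"
  by (simp add: del_def)
lemma del_sum: "del (sum f A) = (\<Sum>i\<in>A. del (f i))"
  by (induction A rule: infinite_finite_induct) (auto simp: del_add)
lemma del_kap[simp]: "del (kap a) = 0"
  using d_sm[of a 1] by (simp add: del_def)
lemma del_kap_mult: "del (kap a * x) = kap a * del x"
  by (simp add: del_mult)
lemma kap_0[simp]: "kap 0 = 0"
  using k_add[of 0 0] by simp
lemma kap_m1: "kap (-1) = -1"
proof -
  have "1 + kap (-1) = 0" using k_add[of 1 "-1"] by (simp add: k_one)
  then show ?thesis by (simp add: eq_neg_iff_add_eq_0 add.commute)
qed

definition M :: "'a fls \<Rightarrow> 'a fls" where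
  "M p = Abs_fls (\<lambda>n. del (p $$ n))"

lemma M_nth[simp]: "M p $$ n = del (p $$ n)"
  unfolding M_def
proof (rule nth_Abs_fls_ex_nat_lower_bound)
  show "\<exists>m. \<forall>k>m. del (p $$ (- int k)) = 0"
    by (rule exI[of _ "nat (- fls_subdegree p)"]) auto
qed

lemma M_add: "M (p + q) = M p + M q"
  by (intro fls_eqI) (simp add: del_add)

lemma M_const: "M (fls_const c) = fls_const (del c)"
  by (intro fls_eqI) simp

lemma M_mult: "M (p * q) = M p * q + p * M q"
proof (intro fls_eqI)
  fix n
  define a b where "a = fls_subdegree p" and "b = fls_subdegree q"
  have pa: "\<And>i. i < a \<Longrightarrow> p $$ i = 0" and qb: "\<And>i. i < b \<Longrightarrow> q $$ i = 0"
    and Mpa: "\<And>i. i < a \<Longrightarrow> M p $$ i = 0" and Mqb: "\<And>i. i < b \<Longrightarrow> M q $$ i = 0"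
    by (auto simp: a_def b_def)
  have "M (p * q) $$ n = del (\<Sum>i=a..n-b. p $$ i * q $$ (n - i))"
    by (simp add: fls_times_nth_bounds[OF pa qb])
  also have "\<dots> = (\<Sum>i=a..n-b. M p $$ i * q $$ (n - i)) + (\<Sum>i=a..n-b. p $$ i * M q $$ (n - i))"
    by (simp add: del_sum del_mult sum.distrib)
  also have "\<dots> = (M p * q + p * M q) $$ n"
    by (simp add: fls_times_nth_bounds[OF Mpa qb] fls_times_nth_bounds[OF pa Mqb])
  finally show "M (p * q) $$ n = (M p * q + p * M q) $$ n" .
qed

definition g :: 'a where "g = d 1"

definition Dl :: "'a fls \<Rightarrow> 'a fls" where
  "Dl p = M p + fls_const g * fls_X * fls_deriv p"

lemma Dl_add: "Dl (p + q) = Dl p + Dl q"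
  by (simp add: Dl_def M_add algebra_simps)

lemma Dl_mult: "Dl (p * q) = Dl p * q + p * Dl q"
  by (simp add: Dl_def M_mult algebra_simps)

lemma Dl_const: "Dl (fls_const c) = fls_const (del c)"
  by (simp add: Dl_def M_const)

lemma Dl_X: "Dl fls_X = fls_const g * fls_X"
proof -
  have "M fls_X = 0" by (intro fls_eqI) simp
  then show ?thesis by (simp add: Dl_def)
qed

lemma Xinv_X: "fls_X_inv * fls_X = (1::'a fls)"
  by (simp add: fls_X_inv_times_conv_shift)

definition DD :: "'a fls \<Rightarrow> 'a fls" where
  "DD p = fls_X_inv * (Dl p + fls_const g * p)"

definition star :: "'a fls \<Rightarrow> 'a fls \<Rightarrow> 'a fls" where
  "star p q = p * q * fls_X"

lemma DD_add: "DD (p + q) = DD p + DD q"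
  by (simp add: DD_def Dl_add algebra_simps)

lemma DD_sm: "DD (fls_const (kap a) * p) = fls_const (kap a) * DD p"
  by (simp add: DD_def Dl_mult Dl_const algebra_simps)

lemma DD_star: "DD (star p q) = star (DD p) q + star p (DD q)"
proof -
  have "DD (star p q) = (fls_X_inv * fls_X) * (Dl (p*q) + fls_const g * (p * q) + fls_const g * (p * q))"
    by (simp add: DD_def star_def Dl_mult Dl_X algebra_simps)
  also have "\<dots> = Dl (p*q) + fls_const g * (p * q) + fls_const g * (p * q)"
    by (simp add: Xinv_X)
  also have "\<dots> = (fls_X_inv * fls_X) * ((Dl p + fls_const g * p) * q + p * (Dl q + fls_const g * q))"
    by (simp only: Xinv_X mult_1_left) (simp add: Dl_mult algebra_simps)
  also have "\<dots> = star (DD p) q + star p (DD q)"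
    by (simp add: DD_def star_def algebra_simps)
  finally show ?thesis .
qed

lemma Dl_1[simp]: "Dl 1 = 0" using Dl_const[of 1] by simp

lemma DD_one: "DD 1 = fls_X_inv * fls_const g"
proof -
  have "Dl 1 = 0" using Dl_const[of 1] by simp
  then show ?thesis by (simp add: DD_def)
qed

lemma DD_dot: "DD (p * q) = DD p * q + p * DD q - p * q * DD 1"
  by (simp add: DD_def DD_one Dl_mult algebra_simps)

lemma Dl_idem: assumes "e0 * e0 = e0" shows "Dl (fls_const e0) = 0"
proof -
  have "del e0 = del (e0*e0)" using assms by simp
  also have "\<dots> = 2 * e0 * del e0" by (simp add: del_mult algebra_simps)
  finally have 1: "del e0 = 2 * e0 * del e0" .
  then have "e0 * del e0 = 2 * (e0 * e0) * del e0" by (metis mult.left_commute mult.assoc)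
  then have "e0 * del e0 = 0" using assms by (simp add: algebra_simps)
  with 1 have "del e0 = 0" by (metis mult.assoc mult_zero_right)
  then show ?thesis by (simp add: Dl_const)
qed

lemma DD_eps: assumes "Dl e = 0" shows "e * DD t = DD (e * t)"
  by (simp add: DD_def Dl_mult assms algebra_simps)

lemma eps_mult_cong:
  fixes e :: "'b::comm_ring_1"
  assumes "e * t = e * t'" "e * u = e * u'"
  shows "e * (t * u) = e * (t' * u')"
proof -
  have "e * (t * u) = (e * t) * u" by (simp add: mult.assoc)
  also have "\<dots> = t' * (e * u)" using assms(1) by (simp add: algebra_simps)
  also have "\<dots> = t' * (e * u')" using assms(2) by simp
  also have "\<dots> = e * (t' * u')" by (simp add: algebra_simps)
  finally show ?thesis .
qed

primrec I :: "('x \<Rightarrow> 'a) \<Rightarrow> ('k,'x) cterm \<Rightarrow> 'a fls" where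
  "I v (CV a) = fls_const (v a)"
| "I v C0 = 0"
| "I v CE = 1"
| "I v (CAdd t u) = I v t + I v u"
| "I v (CSm a t) = fls_const (kap a) * I v t"
| "I v (CDot t u) = I v t * I v u"
| "I v (CStar t u) = star (I v t) (I v u)"
| "I v (CD t) = DD (I v t)"

lemma I_csub: "I v (csub t u) = I v t - I v u"
  by (simp add: csub_def kap_m1)

lemma sound:
  assumes "ccong R c c'" and idem: "e0 * e0 = e0"
    and gen: "\<forall>r\<in>R. fls_const e0 * I v r = 0"
  shows "fls_const e0 * I v c = fls_const e0 * I v c'"
  using assms(1)
proof (induction rule: ccong.induct)
  case (c_dot t t' u u')
  then show ?case using eps_mult_cong by simp
next
  case (c_star t t' u u')
  have "fls_const e0 * (I v u * fls_X) = fls_const e0 * (I v u' * fls_X)"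
    using c_star by (metis mult.assoc)
  with c_star show ?case using eps_mult_cong[of "fls_const e0" "I v t" "I v t'" "I v u * fls_X" "I v u' * fls_X"]
    by (simp add: star_def mult.assoc)
next
  case (c_D t t')
  have "Dl (fls_const e0) = 0" by (rule Dl_idem[OF idem])
  then show ?case using c_D by (simp add: DD_eps)
next
  case (c_gen r)
  then show ?case using gen by simp
next
  case (c_add t t' u u') then show ?case by (simp add: distrib_left)
next
  case (c_sm t t' a)
  have "fls_const e0 * (fls_const (kap a) * I v t) = fls_const (kap a) * (fls_const e0 * I v t)"
    "fls_const e0 * (fls_const (kap a) * I v t') = fls_const (kap a) * (fls_const e0 * I v t')"
    by (rule mult.left_commute)+
  with c_sm show ?case by simp
next
  case (c_sm_sm a b t) then show ?case by (simp add: k_mult fls_const_mult_const[symmetric] mult.assoc del: fls_const_mult_const)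
next
  case (c_sm_one t) then show ?case by (simp add: k_one)
next
  case (c_add_sm a b t) then show ?case by (simp add: k_add fls_plus_const[symmetric] algebra_simps)
next
  case (c_add_inv t) then show ?case by (simp add: kap_m1)
next
  case (c_D_add t u) then show ?case by (simp add: DD_add)
next
  case (c_D_sm a t) then show ?case by (simp add: DD_sm)
next
  case (c_D_star x y) then show ?case by (simp add: DD_star)
next
  case (c_D_dot x y) then show ?case by (simp add: DD_dot I_csub)
qed (simp_all add: star_def algebra_simps)

end

primrec ev :: "('k::field,'x) gterm \<Rightarrow> 'k" where
  "ev (GV a) = 0" | "ev G0 = 0" | "ev GE = 1" | "ev (GAdd t u) = ev t + ev u"
| "ev (GSm a t) = a * ev t" | "ev (GDot t u) = ev t * ev u" | "ev (GCirc t u) = 0"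

lemma ev_sound: "gcong {} t u \<Longrightarrow> ev t = ev u"
  by (induction rule: gcong.induct) (auto simp: gsub_def algebra_simps)

lemma GE_not_0: "\<not> gcong {} (G0::('k::field,'x) gterm) GE"
  using ev_sound by fastforce

definition geq :: "(('k::field,'x) gterm set \<Rightarrow> ('k,'x) gterm) \<Rightarrow> (('k,'x) gterm set \<Rightarrow> ('k,'x) gterm) \<Rightarrow> bool"
  where "geq f h \<longleftrightarrow> (\<forall>S. gcong S (f S) (h S))"

lemma geq_equivp: "equivp geq"
proof (rule equivpI)
  show "reflp geq" by (auto simp: reflp_def geq_def intro: g_refl)
  show "symp geq" by (auto simp: symp_def geq_def intro: g_sym)
  show "transp geq" by (auto simp: transp_def geq_def intro: g_trans)
qed

quotient_type (overloaded) ('k, 'x) gq = "('k::field,'x) gterm set \<Rightarrow> ('k,'x) gterm" / geq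
  by (rule geq_equivp)

lemma g_add0l: "gcong S (GAdd G0 t) t"
  by (rule g_trans[OF g_add_comm g_add_zero])
lemma g_negl: "gcong S (GAdd (GSm (-1) t) t) G0"
  by (rule g_trans[OF g_add_comm g_add_inv])

instantiation gq :: (field, type) comm_ring_1
begin
lift_definition zero_gq :: "('a,'b) gq" is "\<lambda>S. G0" .
lift_definition one_gq :: "('a,'b) gq" is "\<lambda>S. GE" .
lift_definition plus_gq :: "('a,'b) gq \<Rightarrow> ('a,'b) gq \<Rightarrow> ('a,'b) gq" is "\<lambda>f h S. GAdd (f S) (h S)"
  by (auto simp: geq_def intro: g_add)
lift_definition times_gq :: "('a,'b) gq \<Rightarrow> ('a,'b) gq \<Rightarrow> ('a,'b) gq" is "\<lambda>f h S. GDot (f S) (h S)"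
  by (auto simp: geq_def intro: g_dot)
lift_definition uminus_gq :: "('a,'b) gq \<Rightarrow> ('a,'b) gq" is "\<lambda>f S. GSm (-1) (f S)"
  by (auto simp: geq_def intro: g_sm)
lift_definition minus_gq :: "('a,'b) gq \<Rightarrow> ('a,'b) gq \<Rightarrow> ('a,'b) gq" is "\<lambda>f h S. GAdd (f S) (GSm (-1) (h S))"
  by (auto simp: geq_def intro: g_add g_sm)
instance
proof
  fix a b c :: "('a,'b) gq"
  show "a + b + c = a + (b + c)" by transfer (auto simp: geq_def intro: g_add_assoc)
  show "a + b = b + a" by transfer (auto simp: geq_def intro: g_add_comm)
  show "0 + a = a" by transfer (auto simp: geq_def intro: g_add0l)
  show "- a + a = 0" by transfer (auto simp: geq_def intro: g_negl)
  show "a - b = a + - b" by transfer (auto simp: geq_def intro: g_refl)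
  show "a * b * c = a * (b * c)" by transfer (auto simp: geq_def intro: g_dot_assoc)
  show "a * b = b * a" by transfer (auto simp: geq_def intro: g_dot_comm)
  show "1 * a = a" by transfer (auto simp: geq_def intro: g_dot_unit)
  show "(a + b) * c = a * c + b * c" by transfer (auto simp: geq_def intro: g_dot_addl)
  show "(0::('a,'b) gq) \<noteq> 1" by transfer (use GE_not_0 in \<open>auto simp: geq_def\<close>)
qed
end

lift_definition circq :: "('k::field,'x) gq \<Rightarrow> ('k,'x) gq \<Rightarrow> ('k,'x) gq" is "\<lambda>f h S. GCirc (f S) (h S)"
  by (auto simp: geq_def intro: g_circ)
lift_definition kapq :: "'k::field \<Rightarrow> ('k,'x) gq" is "\<lambda>a S. GSm a GE" .
lift_definition iota :: "('k::field,'x) gterm \<Rightarrow> ('k,'x) gq" is "\<lambda>t S. t" .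
lift_definition eidx :: "('k::field,'x) gterm set \<Rightarrow> ('k,'x) gq" is "\<lambda>S0 S. if S = S0 then GE else G0" .

lemma g_sm_dot: "gcong S (GSm a t) (GDot (GSm a GE) t)"
  by (rule g_sym, rule g_trans[OF g_dot_sml g_sm[OF g_dot_unit]])

lemma g_kap_mult: "gcong S (GSm (a*b) GE) (GDot (GSm a GE) (GSm b GE))"
  by (rule g_trans[OF g_sym[OF g_sm_sm] g_sm_dot])

lemma C1: "circq (x*y) z = x * circq y z"
  by transfer (auto simp: geq_def intro: g_comp1)
lemma C3: "circq x y * z - circq x (y*z) = circq y x * z - circq y (x*z)"
  by transfer (auto simp: geq_def gsub_def intro: g_comp2[unfolded gsub_def])
lemma C4: "circq x (y+z) = circq x y + circq x z"
  by transfer (auto simp: geq_def intro: g_circ_addr)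
lemma C5: "circq x (kapq a * y) = kapq a * circq x y"
proof transfer
  fix x y :: "('k::field,'x) gterm set \<Rightarrow> ('k,'x) gterm" and a
  show "geq (\<lambda>S. GCirc (x S) (GDot (GSm a GE) (y S))) (\<lambda>S. GDot (GSm a GE) (GCirc (x S) (y S)))"
    unfolding geq_def
    by (blast intro: g_trans[OF g_circ[OF g_refl g_sym[OF g_sm_dot]] g_trans[OF g_circ_smr g_sm_dot]])
qed
lemma k_add: "kapq (a+b) = kapq a + kapq b"
  by transfer (auto simp: geq_def intro: g_add_sm)
lemma k_mult: "kapq (a*b) = kapq a * kapq b"
  by transfer (auto simp: geq_def intro: g_kap_mult)
lemma k_one: "kapq 1 = 1"
  by transfer (auto simp: geq_def intro: g_sm_one)

lemma circ_left: "circq x y = x * circq 1 y"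
  using C1[of x 1 y] by simp

lemma d_mult: "circq 1 (x*y) = circq 1 x * y + x * circq 1 y - x*y*circq 1 1"
proof -
  have h: "circq x 1 * y - circq x (1*y) = circq 1 x * y - circq 1 (x*y)" by (rule C3)
  have a: "circq x 1 = x * circq 1 1" by (rule circ_left)
  have b: "circq x (1*y) = x * circq 1 y" unfolding mult_1_left by (rule circ_left)
  have "x * circq 1 1 * y - x * circq 1 y = circq 1 x * y - circq 1 (x*y)"
    using h unfolding a b .
  then show ?thesis by (simp add: algebra_simps)
qed

interpretation T: tw "circq 1" kapq
proof
  fix x y :: "('k::field,'x) gq" and a b :: 'k
  show "circq 1 (x + y) = circq 1 x + circq 1 y" by (rule C4)
  show "circq 1 (x * y) = circq 1 x * y + x * circq 1 y - x * y * circq 1 1" by (rule d_mult)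
  show "circq 1 (kapq a * x) = kapq a * circq 1 x" by (rule C5)
  show "kapq (a + b) = kapq a + kapq b" by (rule k_add)
  show "kapq (a * b) = kapq a * kapq b" by (rule k_mult)
  show "kapq 1 = 1" by (rule k_one)
qed

lemma iota_simps:
  "iota (GAdd t u) = iota t + iota u"
  "iota (GSm a t) = kapq a * iota t"
  "iota (GDot t u) = iota t * iota u"
  "iota (GCirc t u) = iota t * circq 1 (iota u)"
  "iota G0 = 0" "iota GE = 1"
proof -
  show "iota (GAdd t u) = iota t + iota u" by transfer (auto simp: geq_def intro: g_refl)
  show "iota (GSm a t) = kapq a * iota t" by transfer (auto simp: geq_def intro: g_sm_dot)
  show "iota (GDot t u) = iota t * iota u" by transfer (auto simp: geq_def intro: g_refl)
  have "iota (GCirc t u) = circq (iota t) (iota u)" by transfer (auto simp: geq_def intro: g_refl)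
  then show "iota (GCirc t u) = iota t * circq 1 (iota u)" by (rule trans[OF _ circ_left])
  show "iota G0 = 0" by transfer (auto simp: geq_def intro: g_refl)
  show "iota GE = 1" by transfer (auto simp: geq_def intro: g_refl)
qed

lemma I_phi: "T.I (\<lambda>a. iota (GV a)) (phi t) = fls_const (iota t)"
proof (induction t)
  case (GCirc t u)
  have "T.I (\<lambda>a. iota (GV a)) (phi (GCirc t u)) =
     fls_const (iota t) * fls_const (T.del (iota u) + T.g * iota u) * (fls_X_inv * fls_X)"
    using GCirc by (simp add: T.star_def T.DD_def T.Dl_const fls_plus_const[symmetric] algebra_simps)
  also have "\<dots> = fls_const (iota (GCirc t u))"
    by (simp add: T.Xinv_X T.del_def T.g_def iota_simps)
  finally show ?case .
qed (auto simp: iota_simps fls_plus_const[symmetric])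

lemma zero_dot: fixes s :: "('k::field,'x) gterm" shows "gcong S (GDot G0 s) G0"
proof -
  have "(0::('k::field,'x) gq) * iota s = 0" by simp
  then have "\<forall>S. gcong S (GDot G0 s) G0" by transfer (simp add: geq_def)
  then show ?thesis by simp
qed

lemma eidx_idem: "eidx S0 * eidx S0 = eidx S0"
  by transfer (auto simp: geq_def intro: g_dot_unit zero_dot)

lemma eidx_gen: "s \<in> S0 \<Longrightarrow> eidx S0 * iota s = 0"
  by transfer (auto simp: geq_def intro: zero_dot g_trans[OF g_dot_unit g_gen])

lemma eidx_inj: "eidx S0 * iota t = eidx S0 * iota u \<Longrightarrow> gcong S0 t u"
proof -
  assume "eidx S0 * iota t = eidx S0 * iota u"
  then have "\<forall>S. gcong S (GDot (if S = S0 then GE else G0) t) (GDot (if S = S0 then GE else G0) u)"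
    by transfer (simp add: geq_def)
  then have "gcong S0 (GDot (if S0 = S0 then GE else G0) t) (GDot (if S0 = S0 then GE else G0) u)"
    by (rule spec)
  then have "gcong S0 (GDot GE t) (GDot GE u)" by simp
  then show ?thesis by (blast intro: g_trans[OF g_sym[OF g_dot_unit] g_trans[OF _ g_dot_unit]])
qed


theorem mainTheorem2:
  fixes S :: "('k::field, 'x) gterm set"
  shows "\<forall>t u. ccong (phi ` S) (phi t) (phi u) \<longrightarrow> gcong S t u"
proof (intro allI impI)
  fix t u assume h: "ccong (phi ` S) (phi t) (phi u)"
  have "fls_const (eidx S) * T.I (\<lambda>a. iota (GV a)) (phi t) = fls_const (eidx S) * T.I (\<lambda>a. iota (GV a)) (phi u)"
    by (rule T.sound[OF h eidx_idem]) (auto simp: I_phi eidx_gen)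
  then have "fls_const (eidx S * iota t) = fls_const (eidx S * iota u)" by (simp add: I_phi)
  then have "fls_const (eidx S * iota t) $$ 0 = fls_const (eidx S * iota u) $$ 0" by simp
  then have "eidx S * iota t = eidx S * iota u" by simp
  then show "gcong S t u" by (rule eidx_inj)
qed

end
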